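(* Let $\mathcal{A}$ be an Abelian category. Let $L\xrightarrow{\ell_2}M\xleftarrow{r_2}R$ be a cospan with pullback $L\times_MR$ and projections $\ell_1\colon L\times_MR\to L$, $r_1\colon L\times_MR\to R$, and let $f\colon Z\to L\times_MR$ be any morphism. Let $\ell_2^*\colon\operatorname{coker}(\ell_1f)\to\operatorname{coker}(\ell_2\ell_1f)$ and $r_2^*\colon\operatorname{coker}(r_1f)\to\operatorname{coker}(\ell_2\ell_1f)=\operatorname{coker}(r_2r_1f)$ be the induced maps on cokernels. Then the canonical morphism \[u\colon\operatorname{coker}f\to\operatorname{coker}(\ell_1f)\times_{\operatorname{coker}(\ell_2\ell_1f)}\operatorname{coker}(r_1f),\] induced by the maps $\operatorname{coker}f\to\operatorname{coker}(\ell_1f)$ and $\operatorname{coker}f\to\operatorname{coker}(r_1f)$ (induced by $\ell_1$ and $r_1$), is an epimorphism. *)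

theory Defs
  imports Main
begin

text \<open>A (preadditive) category given explicitly: objects, arrows, domain, codomain,
composition (Comp g f = g after f), identities, addition of parallel arrows and
zero arrows Zer x y : x \<rightarrow> y.\<close>

record ('o, 'a) acat =
  Ob   :: "'o set"
  Ar   :: "'a set"
  Dom  :: "'a \<Rightarrow> 'o"
  Cod  :: "'a \<Rightarrow> 'o"
  Comp :: "'a \<Rightarrow> 'a \<Rightarrow> 'a"
  Idt  :: "'o \<Rightarrow> 'a"
  Add  :: "'a \<Rightarrow> 'a \<Rightarrow> 'a"
  Zer  :: "'o \<Rightarrow> 'o \<Rightarrow> 'a"

definition Hom :: "('o, 'a) acat \<Rightarrow> 'o \<Rightarrow> 'o \<Rightarrow> 'a set" where
  "Hom C x y = {f \<in> Ar C. Dom C f = x \<and> Cod C f = y}"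

definition category :: "('o, 'a) acat \<Rightarrow> bool" where
  "category C \<longleftrightarrow>
     (\<forall>f \<in> Ar C. Dom C f \<in> Ob C \<and> Cod C f \<in> Ob C) \<and>
     (\<forall>x \<in> Ob C. Idt C x \<in> Hom C x x) \<and>
     (\<forall>f \<in> Ar C. Comp C f (Idt C (Dom C f)) = f \<and> Comp C (Idt C (Cod C f)) f = f) \<and>
     (\<forall>f \<in> Ar C. \<forall>g \<in> Ar C. Cod C f = Dom C g \<longrightarrow> Comp C g f \<in> Hom C (Dom C f) (Cod C g)) \<and>
     (\<forall>f \<in> Ar C. \<forall>g \<in> Ar C. \<forall>h \<in> Ar C. Cod C f = Dom C g \<longrightarrow> Cod C g = Dom C h \<longrightarrow>
        Comp C h (Comp C g f) = Comp C (Comp C h g) f)"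

definition preadditive :: "('o, 'a) acat \<Rightarrow> bool" where
  "preadditive C \<longleftrightarrow> category C \<and>
     (\<forall>x \<in> Ob C. \<forall>y \<in> Ob C.
        Zer C x y \<in> Hom C x y \<and>
        (\<forall>f \<in> Hom C x y. \<forall>g \<in> Hom C x y. Add C f g \<in> Hom C x y) \<and>
        (\<forall>f \<in> Hom C x y. \<forall>g \<in> Hom C x y. \<forall>h \<in> Hom C x y.
            Add C (Add C f g) h = Add C f (Add C g h)) \<and>
        (\<forall>f \<in> Hom C x y. \<forall>g \<in> Hom C x y. Add C f g = Add C g f) \<and>
        (\<forall>f \<in> Hom C x y. Add C f (Zer C x y) = f) \<and>
        (\<forall>f \<in> Hom C x y. \<exists>g \<in> Hom C x y. Add C f g = Zer C x y)) \<and>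
     (\<forall>x \<in> Ob C. \<forall>y \<in> Ob C. \<forall>z \<in> Ob C.
        (\<forall>f \<in> Hom C x y. \<forall>g \<in> Hom C x y. \<forall>h \<in> Hom C y z.
            Comp C h (Add C f g) = Add C (Comp C h f) (Comp C h g)) \<and>
        (\<forall>f \<in> Hom C x y. \<forall>g \<in> Hom C y z. \<forall>h \<in> Hom C y z.
            Comp C (Add C g h) f = Add C (Comp C g f) (Comp C h f)))"

definition is_zero_object :: "('o, 'a) acat \<Rightarrow> 'o \<Rightarrow> bool" where
  "is_zero_object C z \<longleftrightarrow> z \<in> Ob C \<and>
     (\<forall>x \<in> Ob C. (\<exists>!f. f \<in> Hom C z x) \<and> (\<exists>!f. f \<in> Hom C x z))"

definition is_product :: "('o, 'a) acat \<Rightarrow> 'o \<Rightarrow> 'o \<Rightarrow> 'a \<Rightarrow> 'a \<Rightarrow> bool" where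
  "is_product C x y p q \<longleftrightarrow> p \<in> Ar C \<and> q \<in> Ar C \<and> Dom C p = Dom C q \<and>
     Cod C p = x \<and> Cod C q = y \<and>
     (\<forall>a \<in> Ar C. \<forall>b \<in> Ar C. Dom C a = Dom C b \<longrightarrow> Cod C a = x \<longrightarrow> Cod C b = y \<longrightarrow>
        (\<exists>!h. h \<in> Hom C (Dom C a) (Dom C p) \<and> Comp C p h = a \<and> Comp C q h = b))"

definition additive :: "('o, 'a) acat \<Rightarrow> bool" where
  "additive C \<longleftrightarrow> preadditive C \<and> (\<exists>z. is_zero_object C z) \<and>
     (\<forall>x \<in> Ob C. \<forall>y \<in> Ob C. \<exists>p q. is_product C x y p q)"

definition is_kernel :: "('o, 'a) acat \<Rightarrow> 'a \<Rightarrow> 'a \<Rightarrow> bool" where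
  "is_kernel C f k \<longleftrightarrow> f \<in> Ar C \<and> k \<in> Ar C \<and> Cod C k = Dom C f \<and>
     Comp C f k = Zer C (Dom C k) (Cod C f) \<and>
     (\<forall>g \<in> Ar C. Cod C g = Dom C f \<longrightarrow> Comp C f g = Zer C (Dom C g) (Cod C f) \<longrightarrow>
        (\<exists>!h. h \<in> Hom C (Dom C g) (Dom C k) \<and> Comp C k h = g))"

definition is_cokernel :: "('o, 'a) acat \<Rightarrow> 'a \<Rightarrow> 'a \<Rightarrow> bool" where
  "is_cokernel C f c \<longleftrightarrow> f \<in> Ar C \<and> c \<in> Ar C \<and> Dom C c = Cod C f \<and>
     Comp C c f = Zer C (Dom C f) (Cod C c) \<and>
     (\<forall>g \<in> Ar C. Dom C g = Cod C f \<longrightarrow> Comp C g f = Zer C (Dom C f) (Cod C g) \<longrightarrow>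
        (\<exists>!h. h \<in> Hom C (Cod C c) (Cod C g) \<and> Comp C h c = g))"

definition is_mono :: "('o, 'a) acat \<Rightarrow> 'a \<Rightarrow> bool" where
  "is_mono C m \<longleftrightarrow> m \<in> Ar C \<and>
     (\<forall>g \<in> Ar C. \<forall>h \<in> Ar C. Dom C g = Dom C h \<longrightarrow> Cod C g = Dom C m \<longrightarrow> Cod C h = Dom C m \<longrightarrow>
        Comp C m g = Comp C m h \<longrightarrow> g = h)"

definition is_epi :: "('o, 'a) acat \<Rightarrow> 'a \<Rightarrow> bool" where
  "is_epi C e \<longleftrightarrow> e \<in> Ar C \<and>
     (\<forall>g \<in> Ar C. \<forall>h \<in> Ar C. Cod C g = Cod C h \<longrightarrow> Dom C g = Cod C e \<longrightarrow> Dom C h = Cod C e \<longrightarrow>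
        Comp C g e = Comp C h e \<longrightarrow> g = h)"

definition abelian :: "('o, 'a) acat \<Rightarrow> bool" where
  "abelian C \<longleftrightarrow> additive C \<and>
     (\<forall>f \<in> Ar C. \<exists>k. is_kernel C f k) \<and>
     (\<forall>f \<in> Ar C. \<exists>c. is_cokernel C f c) \<and>
     (\<forall>m. is_mono C m \<longrightarrow> (\<exists>f. is_kernel C f m)) \<and>
     (\<forall>e. is_epi C e \<longrightarrow> (\<exists>f. is_cokernel C f e))"

definition is_pullback :: "('o, 'a) acat \<Rightarrow> 'a \<Rightarrow> 'a \<Rightarrow> 'a \<Rightarrow> 'a \<Rightarrow> bool" where
  "is_pullback C l2 r2 l1 r1 \<longleftrightarrow>
     l2 \<in> Ar C \<and> r2 \<in> Ar C \<and> l1 \<in> Ar C \<and> r1 \<in> Ar C \<and>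
     Cod C l2 = Cod C r2 \<and> Dom C l1 = Dom C r1 \<and>
     Cod C l1 = Dom C l2 \<and> Cod C r1 = Dom C r2 \<and>
     Comp C l2 l1 = Comp C r2 r1 \<and>
     (\<forall>a \<in> Ar C. \<forall>b \<in> Ar C. Dom C a = Dom C b \<longrightarrow> Cod C a = Dom C l2 \<longrightarrow> Cod C b = Dom C r2 \<longrightarrow>
        Comp C l2 a = Comp C r2 b \<longrightarrow>
        (\<exists>!h. h \<in> Hom C (Dom C a) (Dom C l1) \<and> Comp C l1 h = a \<and> Comp C r1 h = b))"

end

theory Submission imports Defs begin

lemma in_Hom[simp]: "f \<in> Hom C x y \<longleftrightarrow> f \<in> Ar C \<and> Dom C f = x \<and> Cod C f = y"
  by (simp add: Hom_def)

locale ab = fixes C :: "('o,'a) acat" assumes abel: "abelian C"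
begin

lemma pre: "preadditive C" using abel by (simp add: abelian_def additive_def)
lemma cat: "category C" using pre unfolding preadditive_def by simp

lemmas pre1 = pre[unfolded preadditive_def, THEN conjunct2, THEN conjunct1, rule_format]
lemmas pre2 = pre[unfolded preadditive_def, THEN conjunct2, THEN conjunct2, rule_format]

lemma ar_dom[simp]: "f \<in> Ar C \<Longrightarrow> Dom C f \<in> Ob C" using cat unfolding category_def by auto
lemma ar_cod[simp]: "f \<in> Ar C \<Longrightarrow> Cod C f \<in> Ob C" using cat unfolding category_def by auto

lemma comp_ar[simp]:
  assumes "f \<in> Ar C" "g \<in> Ar C" "Cod C f = Dom C g"
  shows "Comp C g f \<in> Ar C" "Dom C (Comp C g f) = Dom C f" "Cod C (Comp C g f) = Cod C g"
  using cat assms unfolding category_def by auto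

lemma assoc[simp]:
  assumes "f \<in> Ar C" "g \<in> Ar C" "h \<in> Ar C" "Cod C f = Dom C g" "Cod C g = Dom C h"
  shows "Comp C (Comp C h g) f = Comp C h (Comp C g f)"
  using cat assms unfolding category_def by metis

lemma id_ar[simp]:
  assumes "x \<in> Ob C" shows "Idt C x \<in> Ar C" "Dom C (Idt C x) = x" "Cod C (Idt C x) = x"
  using cat assms unfolding category_def by auto

lemma comp_id[simp]: "f \<in> Ar C \<Longrightarrow> Dom C f = x \<Longrightarrow> Comp C f (Idt C x) = f"
  using cat unfolding category_def by auto
lemma id_comp[simp]: "f \<in> Ar C \<Longrightarrow> Cod C f = x \<Longrightarrow> Comp C (Idt C x) f = f"
  using cat unfolding category_def by auto

lemma zer_ar[simp]:
  assumes "x \<in> Ob C" "y \<in> Ob C" shows "Zer C x y \<in> Ar C" "Dom C (Zer C x y) = x" "Cod C (Zer C x y) = y"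
  using pre assms unfolding preadditive_def by auto

lemma add_ar[simp]:
  assumes "f \<in> Ar C" "g \<in> Ar C" "Dom C g = Dom C f" "Cod C g = Cod C f"
  shows "Add C f g \<in> Ar C" "Dom C (Add C f g) = Dom C f" "Cod C (Add C f g) = Cod C f"
proof -
  have "Add C f g \<in> Hom C (Dom C f) (Cod C f)"
    using pre1[of "Dom C f" "Cod C f"] assms by simp
  then show "Add C f g \<in> Ar C" "Dom C (Add C f g) = Dom C f" "Cod C (Add C f g) = Cod C f" by auto
qed

lemma add_assoc:
  assumes "f \<in> Ar C" "g \<in> Ar C" "h \<in> Ar C" "Dom C g = Dom C f" "Cod C g = Cod C f"
     "Dom C h = Dom C f" "Cod C h = Cod C f"
  shows "Add C (Add C f g) h = Add C f (Add C g h)"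
proof -
  have "f \<in> Hom C (Dom C f) (Cod C f)" "g \<in> Hom C (Dom C f) (Cod C f)" "h \<in> Hom C (Dom C f) (Cod C f)"
    using assms by auto
  then show ?thesis using pre1[of "Dom C f" "Cod C f"] assms(1) by (meson ar_cod ar_dom)
qed

lemma add_comm:
  assumes "f \<in> Ar C" "g \<in> Ar C" "Dom C g = Dom C f" "Cod C g = Cod C f"
  shows "Add C f g = Add C g f"
proof -
  have "f \<in> Hom C (Dom C f) (Cod C f)" "g \<in> Hom C (Dom C f) (Cod C f)"
    using assms by auto
  then show ?thesis using pre1[of "Dom C f" "Cod C f"] assms(1) by (meson ar_cod ar_dom)
qed

lemma add_zer[simp]:
  assumes "f \<in> Ar C" "Dom C f = x" "Cod C f = y"
  shows "Add C f (Zer C x y) = f"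
proof -
  have "f \<in> Hom C (Dom C f) (Cod C f)"
    using assms by auto
  then show ?thesis using pre1[of "Dom C f" "Cod C f"] assms by (meson ar_cod ar_dom)
qed

lemma zer_add[simp]:
  assumes "f \<in> Ar C" "Dom C f = x" "Cod C f = y"
  shows "Add C (Zer C x y) f = f"
  using assms add_comm[of f "Zer C x y"] add_zer[of f x y] by auto

lemma neg_ex:
  assumes "f \<in> Ar C"
  shows "\<exists>g. g \<in> Hom C (Dom C f) (Cod C f) \<and> Add C f g = Zer C (Dom C f) (Cod C f)"
proof -
  have "f \<in> Hom C (Dom C f) (Cod C f)"
    using assms by auto
  then show ?thesis using pre1[of "Dom C f" "Cod C f"] assms by (meson ar_cod ar_dom)
qed

lemma distl:
  assumes "f \<in> Ar C" "g \<in> Ar C" "h \<in> Ar C" "Dom C g = Dom C f" "Cod C g = Cod C f" "Dom C h = Cod C f"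
  shows "Comp C h (Add C f g) = Add C (Comp C h f) (Comp C h g)"
proof -
  have "f \<in> Hom C (Dom C f) (Cod C f)" "g \<in> Hom C (Dom C f) (Cod C f)" "h \<in> Hom C (Cod C f) (Cod C h)"
    using assms by auto
  then show ?thesis using pre2[of "Dom C f" "Cod C f" "Cod C h"] assms by (meson ar_cod ar_dom)
qed

lemma distr:
  assumes "f \<in> Ar C" "g \<in> Ar C" "h \<in> Ar C" "Dom C h = Dom C g" "Cod C h = Cod C g" "Cod C f = Dom C g"
  shows "Comp C (Add C g h) f = Add C (Comp C g f) (Comp C h f)"
proof -
  have "f \<in> Hom C (Dom C f) (Cod C f)" "g \<in> Hom C (Cod C f) (Cod C g)" "h \<in> Hom C (Cod C f) (Cod C g)"
    using assms by auto
  then show ?thesis using pre2[of "Dom C f" "Cod C f" "Cod C g"] assms by (meson ar_cod ar_dom)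
qed

lemma add_cancel:
  assumes "a \<in> Ar C" "b \<in> Ar C" "c \<in> Ar C" "Dom C b = Dom C a" "Cod C b = Cod C a"
     "Dom C c = Dom C a" "Cod C c = Cod C a" "Add C a c = Add C b c"
  shows "a = b"
proof -
  obtain n where n: "n \<in> Ar C" "Dom C n = Dom C c" "Cod C n = Cod C c" "Add C c n = Zer C (Dom C a) (Cod C a)"
    using neg_ex[of c] assms by auto
  have "a = Add C a (Add C c n)" using n assms by simp
  also have "\<dots> = Add C (Add C a c) n" by (rule add_assoc[symmetric]) (use n assms in auto)
  also have "\<dots> = Add C (Add C b c) n" using assms by simp
  also have "\<dots> = Add C b (Add C c n)" by (rule add_assoc) (use n assms in auto)
  also have "\<dots> = b" using n assms by simp
  finally show ?thesis .
qed

definition neg where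
  "neg f = (SOME g. g \<in> Hom C (Dom C f) (Cod C f) \<and> Add C f g = Zer C (Dom C f) (Cod C f))"

lemma neg:
  assumes "f \<in> Ar C"
  shows "neg f \<in> Ar C" "Dom C (neg f) = Dom C f" "Cod C (neg f) = Cod C f"
    "Add C f (neg f) = Zer C (Dom C f) (Cod C f)"
  using someI_ex[OF neg_ex[OF assms]] unfolding neg_def[symmetric] by auto

declare neg(1,2,3)[simp]

lemma neg_unique:
  assumes "f \<in> Ar C" "g \<in> Ar C" "Dom C g = Dom C f" "Cod C g = Cod C f"
    "Add C f g = Zer C (Dom C f) (Cod C f)"
  shows "g = neg f"
proof (rule add_cancel[of g "neg f" f])
  show "Add C g f = Add C (neg f) f"
    using assms neg[OF assms(1)] add_comm by (metis neg(1,2,3))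
qed (use assms in auto)

definition sub where "sub f g = Add C f (neg g)"

lemma sub_ar[simp]:
  assumes "f \<in> Ar C" "g \<in> Ar C" "Dom C g = Dom C f" "Cod C g = Cod C f"
  shows "sub f g \<in> Ar C" "Dom C (sub f g) = Dom C f" "Cod C (sub f g) = Cod C f"
  using assms by (auto simp: sub_def)

lemma sub_self[simp]: "f \<in> Ar C \<Longrightarrow> sub f f = Zer C (Dom C f) (Cod C f)"
  by (simp add: sub_def neg)

lemma sub_eq_zero:
  assumes "f \<in> Ar C" "g \<in> Ar C" "Dom C g = Dom C f" "Cod C g = Cod C f"
    "sub f g = Zer C (Dom C f) (Cod C f)"
  shows "f = g"
proof (rule add_cancel[of f g "neg g"])
  show "Add C f (neg g) = Add C g (neg g)" using assms neg[of g] by (simp add: sub_def)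
qed (use assms in auto)

lemma neg_zer[simp]: "x \<in> Ob C \<Longrightarrow> y \<in> Ob C \<Longrightarrow> neg (Zer C x y) = Zer C x y"
  using neg_unique[of "Zer C x y" "Zer C x y"] by simp

lemma sub_zer[simp]: "f \<in> Ar C \<Longrightarrow> Dom C f = x \<Longrightarrow> Cod C f = y \<Longrightarrow> sub f (Zer C x y) = f"
  using ar_dom[of f] ar_cod[of f] by (simp add: sub_def)

lemma comp_zer_r[simp]:
  assumes "f \<in> Ar C" "Dom C f = y" "x \<in> Ob C"
  shows "Comp C f (Zer C x y) = Zer C x (Cod C f)"
proof -
  have y: "y \<in> Ob C" using assms by auto
  have "Add C (Comp C f (Zer C x y)) (Comp C f (Zer C x y)) = Add C (Comp C f (Zer C x y)) (Zer C x (Cod C f))"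
    using distl[of "Zer C x y" "Zer C x y" f] assms y by simp
  then show ?thesis
    using add_cancel[of "Comp C f (Zer C x y)" "Zer C x (Cod C f)" "Comp C f (Zer C x y)"] assms y
    by (simp add: add_comm)
qed

lemma comp_zer_l[simp]:
  assumes "f \<in> Ar C" "Cod C f = y" "z \<in> Ob C"
  shows "Comp C (Zer C y z) f = Zer C (Dom C f) z"
proof -
  have y: "y \<in> Ob C" using assms by auto
  have "Add C (Comp C (Zer C y z) f) (Comp C (Zer C y z) f) = Add C (Comp C (Zer C y z) f) (Zer C (Dom C f) z)"
    using distr[of f "Zer C y z" "Zer C y z"] assms y by simp
  then show ?thesis
    using add_cancel[of "Comp C (Zer C y z) f" "Zer C (Dom C f) z" "Comp C (Zer C y z) f"] assms y
    by (simp add: add_comm)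
qed

lemma comp_neg_l:
  assumes "f \<in> Ar C" "h \<in> Ar C" "Dom C h = Cod C f"
  shows "Comp C h (neg f) = neg (Comp C h f)"
  apply (rule neg_unique)
  using assms distl[of f "neg f" h] neg[OF assms(1)] by auto

lemma comp_neg_r:
  assumes "f \<in> Ar C" "h \<in> Ar C" "Cod C h = Dom C f"
  shows "Comp C (neg f) h = neg (Comp C f h)"
  apply (rule neg_unique)
  using assms distr[of h f "neg f"] neg[OF assms(1)] by auto

lemma comp_sub_l:
  assumes "f \<in> Ar C" "g \<in> Ar C" "h \<in> Ar C" "Dom C g = Dom C f" "Cod C g = Cod C f" "Dom C h = Cod C f"
  shows "Comp C h (sub f g) = sub (Comp C h f) (Comp C h g)"
  using assms distl[of f "neg g" h] comp_neg_l[of g h] by (simp add: sub_def)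

lemma comp_sub_r:
  assumes "f \<in> Ar C" "g \<in> Ar C" "h \<in> Ar C" "Dom C h = Dom C g" "Cod C h = Cod C g" "Cod C f = Dom C g"
  shows "Comp C (sub g h) f = sub (Comp C g f) (Comp C h f)"
  using assms distr[of f g "neg h"] comp_neg_r[of h f] by (simp add: sub_def)

lemma sub_sub:
  assumes "a \<in> Ar C" "b \<in> Ar C" "Dom C b = Dom C a" "Cod C b = Cod C a"
  shows "sub a (sub a b) = b"
proof -
  let ?c = "sub a b"
  have c: "?c \<in> Ar C" "Dom C ?c = Dom C a" "Cod C ?c = Cod C a" using assms by auto
  have "Add C (sub a ?c) ?c = Add C a (Add C (neg ?c) ?c)"
    unfolding sub_def using assms c add_assoc by (simp add: sub_def)
  also have "\<dots> = a" using c neg[of ?c] add_comm[of ?c "neg ?c"] assms by simp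
  also have "\<dots> = Add C b ?c"
  proof -
    have "Add C b ?c = Add C b (Add C (neg b) a)" using assms add_comm[of a "neg b"] by (simp add: sub_def)
    also have "\<dots> = Add C (Add C b (neg b)) a" using assms add_assoc by simp
    also have "\<dots> = a" using assms neg[of b] by simp
    finally show ?thesis by simp
  qed
  finally show ?thesis
    using add_cancel[of "sub a ?c" b ?c] assms c by simp
qed


lemma epiI:
  assumes "e \<in> Ar C"
    and "\<And>t. t \<in> Ar C \<Longrightarrow> Dom C t = Cod C e \<Longrightarrow> Comp C t e = Zer C (Dom C e) (Cod C t) \<Longrightarrow> t = Zer C (Cod C e) (Cod C t)"
  shows "is_epi C e"
  unfolding is_epi_def
proof (intro conjI ballI impI assms(1))
  fix g h assume g: "g \<in> Ar C" and h: "h \<in> Ar C" and c: "Cod C g = Cod C h" "Dom C g = Cod C e" "Dom C h = Cod C e"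
    and eq: "Comp C g e = Comp C h e"
  have "Comp C (sub g h) e = Zer C (Dom C e) (Cod C g)"
  proof -
    have "Comp C (sub g h) e = sub (Comp C g e) (Comp C h e)"
      by (rule comp_sub_r) (use g h c assms(1) in auto)
    also have "\<dots> = Zer C (Dom C e) (Cod C g)" unfolding eq using sub_self[of "Comp C h e"] h c assms(1) by simp
    finally show ?thesis .
  qed
  moreover have sa: "sub g h \<in> Ar C" "Dom C (sub g h) = Dom C g" "Cod C (sub g h) = Cod C g"
    using sub_ar[of g h] g h c by auto
  ultimately have "sub g h = Zer C (Cod C e) (Cod C (sub g h))"
    using c by (intro assms(2)) auto
  then have "sub g h = Zer C (Dom C g) (Cod C g)" using sa c by simp
  then show "g = h" by (rule sub_eq_zero[rotated -1]) (use g h c in auto)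
qed

lemma epi_cancel:
  assumes "is_epi C e" "g \<in> Ar C" "h \<in> Ar C" "Cod C g = Cod C h" "Dom C g = Cod C e" "Dom C h = Cod C e"
    "Comp C g e = Comp C h e"
  shows "g = h"
proof -
  have H: "\<forall>g\<in>Ar C. \<forall>h\<in>Ar C. Cod C g = Cod C h \<longrightarrow> Dom C g = Cod C e \<longrightarrow> Dom C h = Cod C e \<longrightarrow>
        Comp C g e = Comp C h e \<longrightarrow> g = h" using assms(1) unfolding is_epi_def by (rule conjunct2)
  show ?thesis by (rule H[rule_format, OF assms(2-7)])
qed

lemma epi_ar: "is_epi C e \<Longrightarrow> e \<in> Ar C" unfolding is_epi_def by (rule conjunct1)

lemma epiD:
  assumes "is_epi C e" "t \<in> Ar C" "Dom C t = Cod C e" "Comp C t e = Zer C (Dom C e) (Cod C t)"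
  shows "t = Zer C (Cod C e) (Cod C t)"
proof -
  have e: "e \<in> Ar C" using epi_ar assms(1) .
  show ?thesis
    by (rule epi_cancel[OF assms(1,2)]) (use assms e in auto)
qed

lemma monoI:
  assumes "m \<in> Ar C"
    and "\<And>t. t \<in> Ar C \<Longrightarrow> Cod C t = Dom C m \<Longrightarrow> Comp C m t = Zer C (Dom C t) (Cod C m) \<Longrightarrow> t = Zer C (Dom C t) (Dom C m)"
  shows "is_mono C m"
  unfolding is_mono_def
proof (intro conjI ballI impI assms(1))
  fix g h assume g: "g \<in> Ar C" and h: "h \<in> Ar C" and c: "Dom C g = Dom C h" "Cod C g = Dom C m" "Cod C h = Dom C m"
    and eq: "Comp C m g = Comp C m h"
  have "Comp C m (sub g h) = Zer C (Dom C g) (Cod C m)"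
  proof -
    have "Comp C m (sub g h) = sub (Comp C m g) (Comp C m h)"
      by (rule comp_sub_l) (use g h c assms(1) in auto)
    also have "\<dots> = Zer C (Dom C g) (Cod C m)" unfolding eq using sub_self[of "Comp C m h"] h c assms(1) by simp
    finally show ?thesis .
  qed
  moreover have sa: "sub g h \<in> Ar C" "Dom C (sub g h) = Dom C g" "Cod C (sub g h) = Cod C g"
    using sub_ar[of g h] g h c by auto
  ultimately have "sub g h = Zer C (Dom C (sub g h)) (Dom C m)"
    using c by (intro assms(2)) auto
  then have "sub g h = Zer C (Dom C g) (Cod C g)" using sa c by simp
  then show "g = h" by (rule sub_eq_zero[rotated -1]) (use g h c in auto)
qed

lemma monoD:
  assumes "is_mono C m" "g \<in> Ar C" "h \<in> Ar C" "Dom C g = Dom C h" "Cod C g = Dom C m" "Cod C h = Dom C m"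
    "Comp C m g = Comp C m h"
  shows "g = h"
proof -
  have H: "\<forall>g\<in>Ar C. \<forall>h\<in>Ar C. Dom C g = Dom C h \<longrightarrow> Cod C g = Dom C m \<longrightarrow> Cod C h = Dom C m \<longrightarrow>
        Comp C m g = Comp C m h \<longrightarrow> g = h" using assms(1) unfolding is_mono_def by (rule conjunct2)
  show ?thesis by (rule H[rule_format, OF assms(2-7)])
qed

lemma mono_ar: "is_mono C e \<Longrightarrow> e \<in> Ar C" unfolding is_mono_def by (rule conjunct1)

lemma kerD:
  assumes "is_kernel C f k"
  shows "f \<in> Ar C" "k \<in> Ar C" "Cod C k = Dom C f" "Comp C f k = Zer C (Dom C k) (Cod C f)"
  using assms unfolding is_kernel_def by auto

lemma cokD:
  assumes "is_cokernel C f c"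
  shows "f \<in> Ar C" "c \<in> Ar C" "Dom C c = Cod C f" "Comp C c f = Zer C (Dom C f) (Cod C c)"
  using assms unfolding is_cokernel_def by auto

lemma ker_fac:
  assumes "is_kernel C f k" "g \<in> Ar C" "Cod C g = Dom C f" "Comp C f g = Zer C (Dom C g) (Cod C f)"
  shows "\<exists>h. h \<in> Ar C \<and> Dom C h = Dom C g \<and> Cod C h = Dom C k \<and> Comp C k h = g"
proof -
  have "\<exists>!h. h \<in> Hom C (Dom C g) (Dom C k) \<and> Comp C k h = g"
    using assms unfolding is_kernel_def by blast
  then show ?thesis using ex1_implies_ex by auto
qed

lemma cok_fac:
  assumes "is_cokernel C f c" "g \<in> Ar C" "Dom C g = Cod C f" "Comp C g f = Zer C (Dom C f) (Cod C g)"
  shows "\<exists>h. h \<in> Ar C \<and> Dom C h = Cod C c \<and> Cod C h = Cod C g \<and> Comp C h c = g"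
proof -
  have "\<exists>!h. h \<in> Hom C (Cod C c) (Cod C g) \<and> Comp C h c = g"
    using assms unfolding is_cokernel_def by blast
  then show ?thesis using ex1_implies_ex by auto
qed

lemma ker_ex: "f \<in> Ar C \<Longrightarrow> \<exists>k. is_kernel C f k" using abel unfolding abelian_def by blast
lemma mono_ker: "is_mono C m \<Longrightarrow> \<exists>f. is_kernel C f m" using abel unfolding abelian_def by blast
lemma epi_cok: "is_epi C e \<Longrightarrow> \<exists>f. is_cokernel C f e" using abel unfolding abelian_def by blast

lemma ker_mono:
  assumes "is_kernel C f k" shows "is_mono C k"
proof (rule monoI)
  note K = kerD[OF assms]
  show "k \<in> Ar C" using K by simp
  fix t assume t: "t \<in> Ar C" "Cod C t = Dom C k" "Comp C k t = Zer C (Dom C t) (Cod C k)"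
  let ?g = "Zer C (Dom C t) (Cod C k)"
  have g: "?g \<in> Ar C" "Cod C ?g = Dom C f" "Comp C f ?g = Zer C (Dom C ?g) (Cod C f)" using K t by auto
  have "\<exists>!h. h \<in> Hom C (Dom C ?g) (Dom C k) \<and> Comp C k h = ?g"
    using assms g unfolding is_kernel_def by blast
  moreover have "t \<in> Hom C (Dom C ?g) (Dom C k) \<and> Comp C k t = ?g" using t K by simp
  moreover have "Zer C (Dom C t) (Dom C k) \<in> Hom C (Dom C ?g) (Dom C k) \<and> Comp C k (Zer C (Dom C t) (Dom C k)) = ?g"
    using t K by simp
  ultimately show "t = Zer C (Dom C t) (Dom C k)" by blast
qed

lemma mono_comp:
  assumes "is_mono C a" "is_mono C b" "Cod C b = Dom C a"
  shows "is_mono C (Comp C a b)"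
proof -
  have a: "a \<in> Ar C" and b: "b \<in> Ar C" using assms mono_ar by auto
  show ?thesis unfolding is_mono_def
  proof (intro conjI ballI impI)
    show "Comp C a b \<in> Ar C" using a b assms by simp
    fix g h assume g: "g \<in> Ar C" and h: "h \<in> Ar C" and c: "Dom C g = Dom C h"
      "Cod C g = Dom C (Comp C a b)" "Cod C h = Dom C (Comp C a b)" and eq: "Comp C (Comp C a b) g = Comp C (Comp C a b) h"
    have "Comp C a (Comp C b g) = Comp C a (Comp C b h)" using eq a b g h c assms by simp
    then have "Comp C b g = Comp C b h" using monoD[OF assms(1), of "Comp C b g" "Comp C b h"] a b g h c assms by simp
    then show "g = h" using monoD[OF assms(2), of g h] a b g h c assms by simp
  qed
qed

lemma epi_comp:
  assumes "is_epi C a" "is_epi C b" "Cod C b = Dom C a"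
  shows "is_epi C (Comp C a b)"
proof -
  have a: "a \<in> Ar C" and b: "b \<in> Ar C" using assms epi_ar by auto
  show ?thesis unfolding is_epi_def
  proof (intro conjI ballI impI)
    show "Comp C a b \<in> Ar C" using a b assms by simp
    fix g h assume g: "g \<in> Ar C" and h: "h \<in> Ar C" and c: "Cod C g = Cod C h"
      "Dom C g = Cod C (Comp C a b)" "Dom C h = Cod C (Comp C a b)" and eq: "Comp C g (Comp C a b) = Comp C h (Comp C a b)"
    have "Comp C (Comp C g a) b = Comp C (Comp C h a) b" using eq a b g h c assms by simp
    then have "Comp C g a = Comp C h a" by (rule epi_cancel[OF assms(2), rotated -1]) (use a b g h c assms in auto)
    then show "g = h" by (rule epi_cancel[OF assms(1), rotated -1]) (use a b g h c assms in auto)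
  qed
qed

lemma epi_cok_ker:
  assumes "is_epi C D" "is_kernel C D k" "y \<in> Ar C" "Dom C y = Dom C D"
    "Comp C y k = Zer C (Dom C k) (Cod C y)"
  shows "\<exists>s. s \<in> Ar C \<and> Dom C s = Cod C D \<and> Cod C s = Cod C y \<and> Comp C s D = y"
proof -
  obtain f0 where f0: "is_cokernel C f0 D" using epi_cok assms(1) by blast
  note F = cokD[OF f0]
  note K = kerD[OF assms(2)]
  obtain f1 where f1: "f1 \<in> Ar C" "Dom C f1 = Dom C f0" "Cod C f1 = Dom C k" "Comp C k f1 = f0"
    using ker_fac[OF assms(2), of f0] F by auto
  have "Comp C y f0 = Zer C (Dom C f0) (Cod C y)"
    using f1 K assms F by (metis assoc comp_zer_l ar_cod)
  then show ?thesis using cok_fac[OF f0, of y] assms F by auto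
qed


lemma prod_pair:
  assumes "is_product C x y p q" "a \<in> Ar C" "b \<in> Ar C" "Dom C a = Dom C b" "Cod C a = x" "Cod C b = y"
  shows "\<exists>h. h \<in> Ar C \<and> Dom C h = Dom C a \<and> Cod C h = Dom C p \<and> Comp C p h = a \<and> Comp C q h = b"
proof -
  have "\<exists>!h. h \<in> Hom C (Dom C a) (Dom C p) \<and> Comp C p h = a \<and> Comp C q h = b"
    using assms unfolding is_product_def by blast
  then show ?thesis using ex1_implies_ex by auto
qed

lemmas prod_ex = abel[unfolded abelian_def, THEN conjunct1, unfolded additive_def, THEN conjunct2, THEN conjunct2, rule_format]

lemma cover:
  assumes e: "is_epi C e" and g: "g \<in> Ar C" "Cod C g = Cod C e"
  shows "\<exists>s t. s \<in> Ar C \<and> Cod C s = Dom C g \<and> is_epi C s \<and> t \<in> Ar C \<and> Dom C t = Dom C s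
          \<and> Cod C t = Dom C e \<and> Comp C e t = Comp C g s"
proof -
  have e1: "e \<in> Ar C" using e epi_ar by blast
  obtain p q where pq: "is_product C (Dom C e) (Dom C g) p q"
    using prod_ex e1 g by (meson ar_dom)
  have P: "p \<in> Ar C" "q \<in> Ar C" "Dom C q = Dom C p" "Cod C p = Dom C e" "Cod C q = Dom C g"
    using pq unfolding is_product_def by auto
  obtain iE where iE: "iE \<in> Ar C" "Dom C iE = Dom C e" "Cod C iE = Dom C p"
      "Comp C p iE = Idt C (Dom C e)" "Comp C q iE = Zer C (Dom C e) (Dom C g)"
    using prod_pair[OF pq, of "Idt C (Dom C e)" "Zer C (Dom C e) (Dom C g)"] e1 g by auto
  obtain iY where iY: "iY \<in> Ar C" "Dom C iY = Dom C g" "Cod C iY = Dom C p"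
      "Comp C p iY = Zer C (Dom C g) (Dom C e)" "Comp C q iY = Idt C (Dom C g)"
    using prod_pair[OF pq, of "Zer C (Dom C g) (Dom C e)" "Idt C (Dom C g)"] e1 g by auto
  define D where "D = sub (Comp C e p) (Comp C g q)"
  have D: "D \<in> Ar C" "Dom C D = Dom C p" "Cod C D = Cod C e"
    unfolding D_def using P e1 g by auto
  have DiE: "Comp C D iE = e"
    unfolding D_def using comp_sub_r[of iE "Comp C e p" "Comp C g q"] P e1 g iE by simp
  have Depi: "is_epi C D"
  proof (rule epiI[OF D(1)])
    fix t assume t: "t \<in> Ar C" "Dom C t = Cod C D" "Comp C t D = Zer C (Dom C D) (Cod C t)"
    have "Comp C t e = Comp C t (Comp C D iE)" using DiE by simp
    also have "\<dots> = Comp C (Comp C t D) iE" by (rule assoc[symmetric]) (use t D iE in auto)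
    also have "\<dots> = Zer C (Dom C e) (Cod C t)" using t D iE by simp
    finally have "t = Zer C (Cod C e) (Cod C t)" using epiD[OF e t(1)] t D by simp
    then show "t = Zer C (Cod C D) (Cod C t)" using D by simp
  qed
  obtain k where k: "is_kernel C D k" using ker_ex D by blast
  note K = kerD[OF k]
  define s where "s = Comp C q k"
  define t where "t = Comp C p k"
  have s: "s \<in> Ar C" "Dom C s = Dom C k" "Cod C s = Dom C g" unfolding s_def using K P D by auto
  have t: "t \<in> Ar C" "Dom C t = Dom C k" "Cod C t = Dom C e" unfolding t_def using K P D by auto
  have "sub (Comp C e t) (Comp C g s) = Comp C D k"
    unfolding D_def s_def t_def using comp_sub_r[of k "Comp C e p" "Comp C g q"] K P D e1 g by simp
  also have "\<dots> = Zer C (Dom C k) (Cod C e)" using K D by simp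
  finally have ets: "Comp C e t = Comp C g s"
    using sub_eq_zero[of "Comp C e t" "Comp C g s"] s t e1 g by simp
  have sepi: "is_epi C s"
  proof (rule epiI[OF s(1)])
    fix t' assume t': "t' \<in> Ar C" "Dom C t' = Cod C s" "Comp C t' s = Zer C (Dom C s) (Cod C t')"
    have y: "Comp C t' q \<in> Ar C" "Dom C (Comp C t' q) = Dom C D" "Comp C (Comp C t' q) k = Zer C (Dom C k) (Cod C (Comp C t' q))"
      using t' P s D K unfolding s_def by auto
    obtain s' where s': "s' \<in> Ar C" "Dom C s' = Cod C D" "Cod C s' = Cod C t'" "Comp C s' D = Comp C t' q"
      using epi_cok_ker[OF Depi k y(1,2,3)] t' P s by auto
    have "Comp C s' e = Comp C s' (Comp C D iE)" using DiE by simp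
    also have "\<dots> = Comp C (Comp C s' D) iE" by (rule assoc[symmetric]) (use s' D iE in auto)
    also have "\<dots> = Comp C (Comp C t' q) iE" using s'(4) by simp
    also have "\<dots> = Comp C t' (Comp C q iE)" by (rule assoc) (use t' P iE s in auto)
    also have "\<dots> = Comp C t' (Zer C (Dom C e) (Dom C g))" using iE(5) by simp
    also have "\<dots> = Zer C (Dom C e) (Cod C t')" by (rule comp_zer_r) (use t' e1 s in auto)
    also have "\<dots> = Zer C (Dom C e) (Cod C s')" using s'(3) by simp
    finally have s'0: "s' = Zer C (Cod C e) (Cod C s')" using epiD[OF e s'(1)] s' D by simp
    have "t' = Comp C (Comp C t' q) iY" using iY t' P s by simp
    also have "\<dots> = Comp C (Comp C s' D) iY" using s' by simp
    also have "\<dots> = Comp C (Comp C (Zer C (Cod C e) (Cod C s')) D) iY"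
      using arg_cong[OF s'0, of "\<lambda>x. Comp C (Comp C x D) iY"] .
    also have "\<dots> = Comp C (Zer C (Dom C p) (Cod C s')) iY" by (subst comp_zer_l) (use iY D s' e1 ar_cod[OF t'(1)] in auto)
    also have "\<dots> = Zer C (Dom C g) (Cod C t')" by (subst comp_zer_l) (use iY D s' e1 ar_cod[OF t'(1)] in auto)
    finally show "t' = Zer C (Cod C s) (Cod C t')" using s by simp
  qed
  show ?thesis by (rule exI[of _ s], rule exI[of _ t]) (use s t sepi ets in simp)
qed

lemma img_epi:
  assumes h: "is_cokernel C h c" and k: "is_kernel C c k"
    and e: "e \<in> Ar C" "Dom C e = Dom C h" "Cod C e = Dom C k" "Comp C k e = h"
  shows "is_epi C e"
proof (rule epiI[OF e(1)])
  note H = cokD[OF h] and K = kerD[OF k]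
  fix t assume t: "t \<in> Ar C" "Dom C t = Cod C e" "Comp C t e = Zer C (Dom C e) (Cod C t)"
  obtain j where j: "is_kernel C t j" using ker_ex[OF t(1)] by (elim exE)
  note J = kerD[OF j]
  obtain e2 where e2: "e2 \<in> Ar C" "Dom C e2 = Dom C e" "Cod C e2 = Dom C j" "Comp C j e2 = e"
    using ker_fac[OF j e(1)] t by auto
  have kj: "is_mono C (Comp C k j)" using mono_comp[OF ker_mono[OF k] ker_mono[OF j]] J t e by simp
  obtain y where y: "is_kernel C y (Comp C k j)" using mono_ker[OF kj] by (elim exE)
  note Y = kerD[OF y]
  have kj1: "Comp C k j \<in> Ar C" "Dom C (Comp C k j) = Dom C j" "Cod C (Comp C k j) = Cod C k"
    using J K t e by auto
  have "Comp C y h = Comp C y (Comp C k (Comp C j e2))" using e2 e by simp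
  also have "\<dots> = Comp C y (Comp C (Comp C k j) e2)" by (subst assoc) (use e2 e J K t kj1 in auto)
  also have "\<dots> = Comp C (Comp C y (Comp C k j)) e2" by (rule assoc[symmetric]) (use e2 e J K t kj1 Y in auto)
  also have "\<dots> = Zer C (Dom C h) (Cod C y)" using Y kj1 e2 e by simp
  finally obtain y' where y': "y' \<in> Ar C" "Dom C y' = Cod C c" "Cod C y' = Cod C y" "Comp C y' c = y"
    using cok_fac[OF h Y(1)] Y kj1 K H by auto
  have "Comp C y k = Comp C (Comp C y' c) k" using y' by simp
  also have "\<dots> = Comp C y' (Comp C c k)" by (rule assoc) (use y' K H in auto)
  also have "\<dots> = Zer C (Dom C k) (Cod C y)" using y' K H by simp
  finally obtain t0 where t0: "t0 \<in> Ar C" "Dom C t0 = Dom C k" "Cod C t0 = Dom C j" "Comp C (Comp C k j) t0 = k"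
    using ker_fac[OF y, of k] K Y kj1 by auto
  have jt0: "Comp C j t0 = Idt C (Dom C k)"
  proof (rule monoD[OF ker_mono[OF k]])
    have "Comp C k (Comp C j t0) = Comp C (Comp C k j) t0" by (rule assoc[symmetric]) (use t0 J K t e in auto)
    then show "Comp C k (Comp C j t0) = Comp C k (Idt C (Dom C k))" using t0 K by simp
  qed (use t0 J K t e in auto)
  have "t = Comp C t (Comp C j t0)" using jt0 t e by simp
  also have "\<dots> = Comp C (Comp C t j) t0" by (rule assoc[symmetric]) (use t0 J K t e in auto)
  also have "\<dots> = Zer C (Dom C k) (Cod C t)" using J t0 t by simp
  finally show "t = Zer C (Cod C e) (Cod C t)" using e by simp
qed

lemma cok_epi:
  assumes "is_cokernel C f c" shows "is_epi C c"
proof (rule epiI)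
  note K = cokD[OF assms]
  show "c \<in> Ar C" using K by simp
  fix t assume t: "t \<in> Ar C" "Dom C t = Cod C c" "Comp C t c = Zer C (Dom C c) (Cod C t)"
  let ?g = "Zer C (Dom C c) (Cod C t)"
  have g: "?g \<in> Ar C" "Dom C ?g = Cod C f" "Comp C ?g f = Zer C (Dom C f) (Cod C ?g)" using K t by auto
  have "\<exists>!h. h \<in> Hom C (Cod C c) (Cod C ?g) \<and> Comp C h c = ?g"
    using assms g unfolding is_cokernel_def by blast
  moreover have "t \<in> Hom C (Cod C c) (Cod C ?g) \<and> Comp C t c = ?g" using t K by simp
  moreover have "Zer C (Cod C c) (Cod C t) \<in> Hom C (Cod C c) (Cod C ?g) \<and> Comp C (Zer C (Cod C c) (Cod C t)) c = ?g"
    using t K by simp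
  ultimately show "t = Zer C (Cod C c) (Cod C t)" by blast
qed

end

lemma pb_univ:
  assumes "is_pullback C l2 r2 l1 r1"
  shows "\<forall>a \<in> Ar C. \<forall>b \<in> Ar C. Dom C a = Dom C b \<longrightarrow> Cod C a = Dom C l2 \<longrightarrow> Cod C b = Dom C r2 \<longrightarrow>
        Comp C l2 a = Comp C r2 b \<longrightarrow>
        (\<exists>!h. h \<in> Hom C (Dom C a) (Dom C l1) \<and> Comp C l1 h = a \<and> Comp C r1 h = b)"
  using assms unfolding is_pullback_def by (elim conjE)

theorem lemma2p11:
  fixes C :: "('o, 'a) acat"
    and l2 r2 l1 r1 f cf cl cr cm l2s r2s p1 p2 ls rs u :: 'a
  assumes abel: "abelian C"
    and pb: "is_pullback C l2 r2 l1 r1"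
    and f: "f \<in> Ar C" "Cod C f = Dom C l1"
    and cf: "is_cokernel C f cf"
    and cl: "is_cokernel C (Comp C l1 f) cl"
    and cr: "is_cokernel C (Comp C r1 f) cr"
    and cm: "is_cokernel C (Comp C l2 (Comp C l1 f)) cm"
    and l2s: "l2s \<in> Hom C (Cod C cl) (Cod C cm)" "Comp C l2s cl = Comp C cm l2"
    and r2s: "r2s \<in> Hom C (Cod C cr) (Cod C cm)" "Comp C r2s cr = Comp C cm r2"
    and pb2: "is_pullback C l2s r2s p1 p2"
    and ls: "ls \<in> Hom C (Cod C cf) (Cod C cl)" "Comp C ls cf = Comp C cl l1"
    and rs: "rs \<in> Hom C (Cod C cf) (Cod C cr)" "Comp C rs cf = Comp C cr r1"
    and u: "u \<in> Hom C (Cod C cf) (Dom C p1)" "Comp C p1 u = ls" "Comp C p2 u = rs"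
  shows "is_epi C u"
proof -
  interpret ab C using abel by unfold_locales
  have T: "l2 \<in> Ar C" "r2 \<in> Ar C" "l1 \<in> Ar C" "r1 \<in> Ar C"
     "Cod C r2 = Cod C l2" "Dom C r1 = Dom C l1"
     "Dom C l2 = Cod C l1" "Dom C r2 = Cod C r1"
    using pb unfolding is_pullback_def by auto
  have PBeq: "Comp C l2 l1 = Comp C r2 r1"
    using pb unfolding is_pullback_def by auto
  have T2: "l2s \<in> Ar C" "r2s \<in> Ar C" "p1 \<in> Ar C" "p2 \<in> Ar C"
     "Cod C r2s = Cod C l2s" "Dom C p2 = Dom C p1"
     "Cod C p1 = Dom C l2s" "Cod C p2 = Dom C r2s"
    using pb2 unfolding is_pullback_def by auto
  have PB2eq: "Comp C l2s p1 = Comp C r2s p2"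
    using pb2 unfolding is_pullback_def by auto
  have Tf: "f \<in> Ar C" "Cod C f = Dom C l1" using f by auto
  note CF = cokD[OF cf] and CL = cokD[OF cl] and CR = cokD[OF cr] and CM = cokD[OF cm]
  have Tc: "cf \<in> Ar C" "Dom C cf = Cod C f" "cl \<in> Ar C" "Dom C cl = Cod C l1"
    "cr \<in> Ar C" "Dom C cr = Cod C r1" "cm \<in> Ar C" "Dom C cm = Cod C l2"
    using CF CL CR CM T Tf by auto
  have Tc2: "Dom C l2s = Cod C cl" "Cod C l2s = Cod C cm" "Dom C r2s = Cod C cr" "Cod C r2s = Cod C cm"
    "ls \<in> Ar C" "Dom C ls = Cod C cf" "Cod C ls = Cod C cl"
    "rs \<in> Ar C" "Dom C rs = Cod C cf" "Cod C rs = Cod C cr"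
    "u \<in> Ar C" "Dom C u = Cod C cf" "Cod C u = Dom C p1"
    using l2s r2s ls rs u by auto
  have clz: "Comp C cl (Comp C l1 f) = Zer C (Dom C f) (Cod C cl)" using CL T Tf by simp
  note TT = T T2 Tf Tc Tc2
  obtain s1 a1 where S1: "s1 \<in> Ar C" "Cod C s1 = Dom C p1" "a1 \<in> Ar C" "Dom C a1 = Dom C s1"
      "Cod C a1 = Cod C l1" and s1e: "is_epi C s1" and a1eq: "Comp C cl a1 = Comp C p1 s1"
    using cover[OF cok_epi[OF cl], of p1] TT by auto
  obtain s2 b2 where S2: "s2 \<in> Ar C" "Cod C s2 = Dom C s1" "b2 \<in> Ar C" "Dom C b2 = Dom C s2"
      "Cod C b2 = Cod C r1" and s2e: "is_epi C s2" and b2eq: "Comp C cr b2 = Comp C (Comp C p2 s1) s2"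
    using cover[OF cok_epi[OF cr], of "Comp C p2 s1"] TT S1 by auto
  define a2 where "a2 = Comp C a1 s2"
  have A2: "a2 \<in> Ar C" "Dom C a2 = Dom C s2" "Cod C a2 = Cod C l1" unfolding a2_def using S1 S2 by auto
  define d where "d = sub (Comp C l2 a2) (Comp C r2 b2)"
  have D: "d \<in> Ar C" "Dom C d = Dom C s2" "Cod C d = Cod C l2" unfolding d_def using A2 S2 TT by auto
  note TT = TT S1 S2 A2 D
  have eqL: "Comp C cm (Comp C l2 a2) = Comp C l2s (Comp C p1 (Comp C s1 s2))"
  proof -
    have "Comp C cm (Comp C l2 a2) = Comp C (Comp C cm l2) a2" by (rule assoc[symmetric]) (use TT in auto)
    also have "\<dots> = Comp C (Comp C l2s cl) a2" by (simp only: l2s(2))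
    also have "\<dots> = Comp C l2s (Comp C cl a2)" by (rule assoc) (use TT in auto)
    also have "Comp C cl a2 = Comp C (Comp C cl a1) s2" unfolding a2_def by (rule assoc[symmetric]) (use TT in auto)
    also have "\<dots> = Comp C (Comp C p1 s1) s2" by (simp only: a1eq)
    also have "\<dots> = Comp C p1 (Comp C s1 s2)" by (rule assoc) (use TT in auto)
    finally show ?thesis .
  qed
  have eqR: "Comp C cm (Comp C r2 b2) = Comp C l2s (Comp C p1 (Comp C s1 s2))"
  proof -
    have "Comp C cm (Comp C r2 b2) = Comp C (Comp C cm r2) b2" by (rule assoc[symmetric]) (use TT in auto)
    also have "\<dots> = Comp C (Comp C r2s cr) b2" by (simp only: r2s(2))
    also have "\<dots> = Comp C r2s (Comp C cr b2)" by (rule assoc) (use TT in auto)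
    also have "Comp C cr b2 = Comp C p2 (Comp C s1 s2)" unfolding b2eq by (rule assoc) (use TT in auto)
    also have "Comp C r2s (Comp C p2 (Comp C s1 s2)) = Comp C (Comp C r2s p2) (Comp C s1 s2)"
      by (rule assoc[symmetric]) (use TT in auto)
    also have "\<dots> = Comp C (Comp C l2s p1) (Comp C s1 s2)" by (simp only: PB2eq)
    also have "\<dots> = Comp C l2s (Comp C p1 (Comp C s1 s2))" by (rule assoc) (use TT in auto)
    finally show ?thesis .
  qed
  have cmd: "Comp C cm d = Zer C (Dom C s2) (Cod C cm)"
  proof -
    have "Comp C cm d = sub (Comp C cm (Comp C l2 a2)) (Comp C cm (Comp C r2 b2))"
      unfolding d_def by (rule comp_sub_l) (use TT in auto)
    also have "\<dots> = sub (Comp C l2s (Comp C p1 (Comp C s1 s2))) (Comp C l2s (Comp C p1 (Comp C s1 s2)))"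
      by (simp only: eqL eqR)
    also have "\<dots> = Zer C (Dom C s2) (Cod C cm)" by (subst sub_self) (use TT in auto)
    finally show ?thesis .
  qed
  obtain kc where kc: "is_kernel C cm kc" using ker_ex[OF Tc(7)] by (elim exE)
  note KC = kerD[OF kc]
  define h0 where "h0 = Comp C l2 (Comp C l1 f)"
  have H0: "h0 \<in> Ar C" "Dom C h0 = Dom C f" "Cod C h0 = Cod C l2" unfolding h0_def using TT by auto
  have cmh0: "Comp C cm h0 = Zer C (Dom C h0) (Cod C cm)" using CM unfolding h0_def by simp
  obtain e' where E': "e' \<in> Ar C" "Dom C e' = Dom C f" "Cod C e' = Dom C kc" and e'eq: "Comp C kc e' = h0"
    using ker_fac[OF kc H0(1)] H0 cmh0 Tc by auto
  have e'epi: "is_epi C e'" using img_epi[OF cm kc E'(1)] E' e'eq H0 unfolding h0_def by auto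
  obtain d' where D': "d' \<in> Ar C" "Dom C d' = Dom C s2" "Cod C d' = Dom C kc" and d'eq: "Comp C kc d' = d"
    using ker_fac[OF kc D(1)] D cmd Tc by auto
  obtain s3 z where S3: "s3 \<in> Ar C" "Cod C s3 = Dom C s2" "z \<in> Ar C" "Dom C z = Dom C s3"
      "Cod C z = Dom C f" and s3e: "is_epi C s3" and zeq: "Comp C e' z = Comp C d' s3"
    using cover[OF e'epi, of d'] D' E' by auto
  note TT = TT E' D' S3 H0 KC
  have h0z: "Comp C h0 z = Comp C d s3"
  proof -
    have "Comp C h0 z = Comp C (Comp C kc e') z" by (simp only: e'eq)
    also have "\<dots> = Comp C kc (Comp C e' z)" by (rule assoc) (use TT in auto)
    also have "\<dots> = Comp C kc (Comp C d' s3)" by (simp only: zeq)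
    also have "\<dots> = Comp C (Comp C kc d') s3" by (rule assoc[symmetric]) (use TT in auto)
    also have "\<dots> = Comp C d s3" by (simp only: d'eq)
    finally show ?thesis .
  qed
  define a3 where "a3 = sub (Comp C a2 s3) (Comp C l1 (Comp C f z))"
  define b3 where "b3 = Comp C b2 s3"
  have A3: "a3 \<in> Ar C" "Dom C a3 = Dom C s3" "Cod C a3 = Cod C l1"
    unfolding a3_def using TT by auto
  have B3: "b3 \<in> Ar C" "Dom C b3 = Dom C s3" "Cod C b3 = Cod C r1"
    unfolding b3_def using TT by auto
  note TT = TT A3 B3
  have l2a3: "Comp C l2 a3 = Comp C r2 b3"
  proof -
    have "Comp C l2 a3 = sub (Comp C l2 (Comp C a2 s3)) (Comp C l2 (Comp C l1 (Comp C f z)))"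
      unfolding a3_def by (rule comp_sub_l) (use TT in auto)
    also have "Comp C l2 (Comp C l1 (Comp C f z)) = Comp C h0 z"
      unfolding h0_def using TT by simp
    also have "\<dots> = Comp C d s3" by (rule h0z)
    also have "\<dots> = sub (Comp C (Comp C l2 a2) s3) (Comp C (Comp C r2 b2) s3)"
      unfolding d_def by (rule comp_sub_r) (use TT in auto)
    also have "Comp C (Comp C l2 a2) s3 = Comp C l2 (Comp C a2 s3)" by (rule assoc) (use TT in auto)
    also have "Comp C (Comp C r2 b2) s3 = Comp C r2 b3" unfolding b3_def by (rule assoc) (use TT in auto)
    also have "sub (Comp C l2 (Comp C a2 s3)) (sub (Comp C l2 (Comp C a2 s3)) (Comp C r2 b3)) = Comp C r2 b3"
      by (rule sub_sub) (use TT in auto)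
    finally show ?thesis .
  qed
  obtain x where X: "x \<in> Ar C" "Dom C x = Dom C s3" "Cod C x = Dom C l1" and xeq: "Comp C l1 x = a3" "Comp C r1 x = b3"
  proof -
    have "\<exists>!h. h \<in> Hom C (Dom C a3) (Dom C l1) \<and> Comp C l1 h = a3 \<and> Comp C r1 h = b3"
      by (rule pb_univ[OF pb, rule_format, OF A3(1) B3(1)]) (use A3 B3 T l2a3 in auto)
    then obtain h where "h \<in> Hom C (Dom C a3) (Dom C l1) \<and> Comp C l1 h = a3 \<and> Comp C r1 h = b3"
      by (elim ex1E) 
    then show ?thesis using that A3 by auto
  qed
  note TT = TT X
  define S where "S = Comp C s1 (Comp C s2 s3)"
  have Sar: "S \<in> Ar C" "Dom C S = Dom C s3" "Cod C S = Dom C p1" unfolding S_def using TT by auto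
  have Sepi: "is_epi C S" unfolding S_def
    by (rule epi_comp[OF s1e epi_comp[OF s2e s3e]]) (use TT in auto)
  define v where "v = Comp C u (Comp C cf x)"
  have V: "v \<in> Ar C" "Dom C v = Dom C s3" "Cod C v = Dom C p1"
    unfolding v_def using TT by auto
  note TT = TT Sar V
  have v1: "Comp C p1 v = Comp C p1 S"
  proof -
    have "Comp C p1 v = Comp C (Comp C p1 u) (Comp C cf x)" unfolding v_def by (rule assoc[symmetric]) (use TT in auto)
    also have "\<dots> = Comp C (Comp C ls cf) x" unfolding u(2) by (rule assoc[symmetric]) (use TT in auto)
    also have "\<dots> = Comp C (Comp C cl l1) x" by (simp only: ls(2))
    also have "\<dots> = Comp C cl a3" unfolding xeq(1)[symmetric] by (rule assoc) (use TT in auto)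
    also have "\<dots> = sub (Comp C cl (Comp C a2 s3)) (Comp C cl (Comp C l1 (Comp C f z)))"
      unfolding a3_def by (rule comp_sub_l) (use TT in auto)
    also have "Comp C cl (Comp C l1 (Comp C f z)) = Comp C (Comp C cl (Comp C l1 f)) z"
      using TT by simp
    also have "\<dots> = Zer C (Dom C s3) (Cod C cl)" unfolding clz using TT by simp
    also have "sub (Comp C cl (Comp C a2 s3)) (Zer C (Dom C s3) (Cod C cl)) = Comp C cl (Comp C a2 s3)"
      by (rule sub_zer) (use TT in auto)
    also have "Comp C cl (Comp C a2 s3) = Comp C (Comp C cl a1) (Comp C s2 s3)"
      unfolding a2_def using TT by simp
    also have "\<dots> = Comp C (Comp C p1 s1) (Comp C s2 s3)" by (simp only: a1eq)
    also have "\<dots> = Comp C p1 S" unfolding S_def by (rule assoc) (use TT in auto)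
    finally show ?thesis .
  qed
  have v2: "Comp C p2 v = Comp C p2 S"
  proof -
    have "Comp C p2 v = Comp C (Comp C p2 u) (Comp C cf x)" unfolding v_def by (rule assoc[symmetric]) (use TT in auto)
    also have "\<dots> = Comp C (Comp C rs cf) x" unfolding u(3) by (rule assoc[symmetric]) (use TT in auto)
    also have "\<dots> = Comp C (Comp C cr r1) x" by (simp only: rs(2))
    also have "\<dots> = Comp C cr b3" unfolding xeq(2)[symmetric] by (rule assoc) (use TT in auto)
    also have "\<dots> = Comp C (Comp C cr b2) s3" unfolding b3_def by (rule assoc[symmetric]) (use TT in auto)
    also have "\<dots> = Comp C (Comp C (Comp C p2 s1) s2) s3" by (simp only: b2eq)
    also have "\<dots> = Comp C p2 S" unfolding S_def using TT by simp
    finally show ?thesis .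
  qed
  have vS: "v = S"
  proof -
    have a: "Comp C l2s (Comp C p1 S) = Comp C r2s (Comp C p2 S)"
    proof -
      have "Comp C l2s (Comp C p1 S) = Comp C (Comp C l2s p1) S" by (rule assoc[symmetric]) (use TT in auto)
      also have "\<dots> = Comp C (Comp C r2s p2) S" by (simp only: PB2eq)
      also have "\<dots> = Comp C r2s (Comp C p2 S)" by (rule assoc) (use TT in auto)
      finally show ?thesis .
    qed
    have "\<exists>!h. h \<in> Hom C (Dom C (Comp C p1 S)) (Dom C p1) \<and> Comp C p1 h = Comp C p1 S \<and> Comp C p2 h = Comp C p2 S"
      by (rule pb_univ[OF pb2, rule_format]) (use a TT in auto)
    moreover have "v \<in> Hom C (Dom C (Comp C p1 S)) (Dom C p1) \<and> Comp C p1 v = Comp C p1 S \<and> Comp C p2 v = Comp C p2 S"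
      using v1 v2 TT by auto
    moreover have "S \<in> Hom C (Dom C (Comp C p1 S)) (Dom C p1) \<and> Comp C p1 S = Comp C p1 S \<and> Comp C p2 S = Comp C p2 S"
      using TT by auto
    ultimately show ?thesis by (elim ex1E) (metis (no_types, lifting))
  qed
  show ?thesis unfolding is_epi_def
  proof (intro conjI ballI impI)
    show "u \<in> Ar C" using u by simp
    fix g h assume g: "g \<in> Ar C" and h: "h \<in> Ar C" and c: "Cod C g = Cod C h" "Dom C g = Cod C u" "Dom C h = Cod C u"
      and eq: "Comp C g u = Comp C h u"
    have "Comp C g S = Comp C (Comp C g u) (Comp C cf x)" unfolding vS[symmetric] v_def
      by (rule assoc[symmetric]) (use TT g c in auto)
    also have "\<dots> = Comp C (Comp C h u) (Comp C cf x)" by (simp only: eq)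
    also have "\<dots> = Comp C h S" unfolding vS[symmetric] v_def
      by (rule assoc) (use TT h c in auto)
    finally show "g = h" by (rule epi_cancel[OF Sepi g h, rotated -1]) (use TT c in auto)
  qed
qed

end
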